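(* Let $\mathcal{A}$ be an admissibly deflation-percolating subcategory of a conflation category $\mathcal{C}$. Let $f\colon C\to A$ be a morphism in $\mathcal{C}$ with $A\in\mathcal{A}$. If $f$ is a monomorphism, then $f$ is an inflation; if $f$ is an epimorphism, then $f$ is a deflation. In particular, every morphism $X\to 0$ is a deflation.
   Context: A conflation category is an additive category together with a class of kernel-cokernel pairs $A\xrightarrow{f}B\xrightarrow{g}C$ ($f=\ker g$, $g=\operatorname{coker} f$), closed under isomorphisms, called conflations; first map an inflation, second a deflation. A non-empty full subcategory $\mathcal{A}$ of a conflation category $\mathcal{C}$ is admissibly deflation-percolating if: (A1) for every conflation $A'\rightarrowtail A\twoheadrightarrow A''$, $A\in\mathcal{A}$ iff $A',A''\in\mathcal{A}$; (A2) every morphism $C\to A$ with $A\in\mathcal{A}$ factors as a deflation $C\twoheadrightarrow A'$ followed by an inflation $A'\rightarrowtail A$ with $A'\in\mathcal{A}$; (A3) if $a\colon C\rightarrowtail D$ is an inflation and $b\colon C\twoheadrightarrow A$ a deflation with $A\in\mathcal{A}$, the pushout of $a$ along $b$ exists and yields a deflation $D\twoheadrightarrow P$ and an inflation $A\rightarrowtail P$. *)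

theory Defs
  imports Main
begin

text \<open>An (additive) category presented concretely: objects, morphisms, domain,
 codomain, identities, composition (Cp g f = g after f), and the abelian group
 structure on hom-sets (addition, zero morphisms, negation).\<close>

record ('o, 'm) precat =
  Ob :: "'o set"
  Ar :: "'m set"
  Dm :: "'m \<Rightarrow> 'o"
  Cd :: "'m \<Rightarrow> 'o"
  Idm :: "'o \<Rightarrow> 'm"
  Cp :: "'m \<Rightarrow> 'm \<Rightarrow> 'm"
  Ad :: "'m \<Rightarrow> 'm \<Rightarrow> 'm"
  Zr :: "'o \<Rightarrow> 'o \<Rightarrow> 'm"
  Ng :: "'m \<Rightarrow> 'm"

definition hom :: "('o, 'm) precat \<Rightarrow> 'o \<Rightarrow> 'o \<Rightarrow> 'm set" where
  "hom C X Y = {f \<in> Ar C. Dm C f = X \<and> Cd C f = Y}"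

definition is_category :: "('o, 'm) precat \<Rightarrow> bool" where
  "is_category C \<longleftrightarrow>
     (\<forall>f \<in> Ar C. Dm C f \<in> Ob C \<and> Cd C f \<in> Ob C) \<and>
     (\<forall>X \<in> Ob C. Idm C X \<in> hom C X X) \<and>
     (\<forall>X Y Z f g. f \<in> hom C X Y \<longrightarrow> g \<in> hom C Y Z \<longrightarrow> Cp C g f \<in> hom C X Z) \<and>
     (\<forall>X Y f. f \<in> hom C X Y \<longrightarrow> Cp C f (Idm C X) = f \<and> Cp C (Idm C Y) f = f) \<and>
     (\<forall>W X Y Z f g h. f \<in> hom C W X \<longrightarrow> g \<in> hom C X Y \<longrightarrow> h \<in> hom C Y Z \<longrightarrow>
        Cp C h (Cp C g f) = Cp C (Cp C h g) f)"

definition is_preadditive :: "('o, 'm) precat \<Rightarrow> bool" where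
  "is_preadditive C \<longleftrightarrow> is_category C \<and>
     (\<forall>X \<in> Ob C. \<forall>Y \<in> Ob C.
        Zr C X Y \<in> hom C X Y \<and>
        (\<forall>f \<in> hom C X Y. \<forall>g \<in> hom C X Y. Ad C f g \<in> hom C X Y) \<and>
        (\<forall>f \<in> hom C X Y. Ng C f \<in> hom C X Y) \<and>
        (\<forall>f \<in> hom C X Y. \<forall>g \<in> hom C X Y. \<forall>h \<in> hom C X Y.
           Ad C (Ad C f g) h = Ad C f (Ad C g h)) \<and>
        (\<forall>f \<in> hom C X Y. \<forall>g \<in> hom C X Y. Ad C f g = Ad C g f) \<and>
        (\<forall>f \<in> hom C X Y. Ad C f (Zr C X Y) = f) \<and>
        (\<forall>f \<in> hom C X Y. Ad C f (Ng C f) = Zr C X Y)) \<and>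
     (\<forall>X Y Z f g h. f \<in> hom C X Y \<longrightarrow> g \<in> hom C X Y \<longrightarrow> h \<in> hom C Y Z \<longrightarrow>
        Cp C h (Ad C f g) = Ad C (Cp C h f) (Cp C h g)) \<and>
     (\<forall>X Y Z f g h. h \<in> hom C X Y \<longrightarrow> f \<in> hom C Y Z \<longrightarrow> g \<in> hom C Y Z \<longrightarrow>
        Cp C (Ad C f g) h = Ad C (Cp C f h) (Cp C g h))"

definition zero_object :: "('o, 'm) precat \<Rightarrow> 'o \<Rightarrow> bool" where
  "zero_object C Z \<longleftrightarrow> Z \<in> Ob C \<and>
     (\<forall>X \<in> Ob C. (\<exists>!f. f \<in> hom C X Z) \<and> (\<exists>!f. f \<in> hom C Z X))"

definition is_biproduct ::
  "('o, 'm) precat \<Rightarrow> 'o \<Rightarrow> 'o \<Rightarrow> 'o \<Rightarrow> 'm \<Rightarrow> 'm \<Rightarrow> 'm \<Rightarrow> 'm \<Rightarrow> bool" where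
  "is_biproduct C X Y P i1 i2 p1 p2 \<longleftrightarrow> P \<in> Ob C \<and>
     i1 \<in> hom C X P \<and> i2 \<in> hom C Y P \<and> p1 \<in> hom C P X \<and> p2 \<in> hom C P Y \<and>
     Cp C p1 i1 = Idm C X \<and> Cp C p2 i2 = Idm C Y \<and>
     Cp C p1 i2 = Zr C Y X \<and> Cp C p2 i1 = Zr C X Y \<and>
     Ad C (Cp C i1 p1) (Cp C i2 p2) = Idm C P"

definition is_additive :: "('o, 'm) precat \<Rightarrow> bool" where
  "is_additive C \<longleftrightarrow> is_preadditive C \<and> (\<exists>Z. zero_object C Z) \<and>
     (\<forall>X \<in> Ob C. \<forall>Y \<in> Ob C. \<exists>P i1 i2 p1 p2. is_biproduct C X Y P i1 i2 p1 p2)"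

definition is_iso :: "('o, 'm) precat \<Rightarrow> 'm \<Rightarrow> bool" where
  "is_iso C f \<longleftrightarrow> f \<in> Ar C \<and>
     (\<exists>g \<in> hom C (Cd C f) (Dm C f). Cp C g f = Idm C (Dm C f) \<and> Cp C f g = Idm C (Cd C f))"

definition is_mono :: "('o, 'm) precat \<Rightarrow> 'm \<Rightarrow> bool" where
  "is_mono C f \<longleftrightarrow> f \<in> Ar C \<and>
     (\<forall>T g h. g \<in> hom C T (Dm C f) \<longrightarrow> h \<in> hom C T (Dm C f) \<longrightarrow>
        Cp C f g = Cp C f h \<longrightarrow> g = h)"

definition is_epi :: "('o, 'm) precat \<Rightarrow> 'm \<Rightarrow> bool" where
  "is_epi C f \<longleftrightarrow> f \<in> Ar C \<and>
     (\<forall>T g h. g \<in> hom C (Cd C f) T \<longrightarrow> h \<in> hom C (Cd C f) T \<longrightarrow>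
        Cp C g f = Cp C h f \<longrightarrow> g = h)"

text \<open>f = ker g (with Cd f = Dm g).\<close>
definition is_kernel :: "('o, 'm) precat \<Rightarrow> 'm \<Rightarrow> 'm \<Rightarrow> bool" where
  "is_kernel C f g \<longleftrightarrow> f \<in> Ar C \<and> g \<in> Ar C \<and> Cd C f = Dm C g \<and>
     Cp C g f = Zr C (Dm C f) (Cd C g) \<and>
     (\<forall>T h. h \<in> hom C T (Dm C g) \<longrightarrow> Cp C g h = Zr C T (Cd C g) \<longrightarrow>
        (\<exists>!u. u \<in> hom C T (Dm C f) \<and> Cp C f u = h))"

text \<open>g = coker f (with Cd f = Dm g).\<close>
definition is_cokernel :: "('o, 'm) precat \<Rightarrow> 'm \<Rightarrow> 'm \<Rightarrow> bool" where
  "is_cokernel C g f \<longleftrightarrow> f \<in> Ar C \<and> g \<in> Ar C \<and> Cd C f = Dm C g \<and>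
     Cp C g f = Zr C (Dm C f) (Cd C g) \<and>
     (\<forall>T h. h \<in> hom C (Cd C f) T \<longrightarrow> Cp C h f = Zr C (Dm C f) T \<longrightarrow>
        (\<exists>!u. u \<in> hom C (Cd C g) T \<and> Cp C u g = h))"

definition kernel_cokernel_pair :: "('o, 'm) precat \<Rightarrow> 'm \<Rightarrow> 'm \<Rightarrow> bool" where
  "kernel_cokernel_pair C f g \<longleftrightarrow> is_kernel C f g \<and> is_cokernel C g f"

definition conflation_category :: "('o, 'm) precat \<Rightarrow> ('m \<times> 'm) set \<Rightarrow> bool" where
  "conflation_category C E \<longleftrightarrow> is_additive C \<and>
     (\<forall>(f, g) \<in> E. kernel_cokernel_pair C f g) \<and>
     (\<forall>f g f' g' a b c. (f, g) \<in> E \<longrightarrow> kernel_cokernel_pair C f' g' \<longrightarrow>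
        a \<in> hom C (Dm C f) (Dm C f') \<longrightarrow> b \<in> hom C (Cd C f) (Cd C f') \<longrightarrow>
        c \<in> hom C (Cd C g) (Cd C g') \<longrightarrow>
        is_iso C a \<longrightarrow> is_iso C b \<longrightarrow> is_iso C c \<longrightarrow>
        Cp C b f = Cp C f' a \<longrightarrow> Cp C c g = Cp C g' b \<longrightarrow> (f', g') \<in> E)"

definition inflation :: "('m \<times> 'm) set \<Rightarrow> 'm \<Rightarrow> bool" where
  "inflation E f \<longleftrightarrow> (\<exists>g. (f, g) \<in> E)"

definition deflation :: "('m \<times> 'm) set \<Rightarrow> 'm \<Rightarrow> bool" where
  "deflation E g \<longleftrightarrow> (\<exists>f. (f, g) \<in> E)"

definition is_pushout ::
  "('o, 'm) precat \<Rightarrow> 'm \<Rightarrow> 'm \<Rightarrow> 'o \<Rightarrow> 'm \<Rightarrow> 'm \<Rightarrow> bool" where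
  "is_pushout C a b P b' a' \<longleftrightarrow> a \<in> Ar C \<and> b \<in> Ar C \<and> Dm C a = Dm C b \<and> P \<in> Ob C \<and>
     b' \<in> hom C (Cd C a) P \<and> a' \<in> hom C (Cd C b) P \<and> Cp C b' a = Cp C a' b \<and>
     (\<forall>T x y. x \<in> hom C (Cd C a) T \<longrightarrow> y \<in> hom C (Cd C b) T \<longrightarrow> Cp C x a = Cp C y b \<longrightarrow>
        (\<exists>!u. u \<in> hom C P T \<and> Cp C u b' = x \<and> Cp C u a' = y))"

text \<open>Admissibly deflation-percolating (full, non-empty) subcategory, given by its
 set of objects.\<close>
definition adm_deflation_percolating ::
  "('o, 'm) precat \<Rightarrow> ('m \<times> 'm) set \<Rightarrow> 'o set \<Rightarrow> bool" where
  "adm_deflation_percolating C E \<A> \<longleftrightarrow> \<A> \<noteq> {} \<and> \<A> \<subseteq> Ob C \<and>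
     \<comment> \<open>A1\<close>
     (\<forall>(f, g) \<in> E. Cd C f \<in> \<A> \<longleftrightarrow> (Dm C f \<in> \<A> \<and> Cd C g \<in> \<A>)) \<and>
     \<comment> \<open>A2\<close>
     (\<forall>X A h. A \<in> \<A> \<longrightarrow> h \<in> hom C X A \<longrightarrow>
        (\<exists>A' d i. A' \<in> \<A> \<and> d \<in> hom C X A' \<and> i \<in> hom C A' A \<and>
           deflation E d \<and> inflation E i \<and> Cp C i d = h)) \<and>
     \<comment> \<open>A3\<close>
     (\<forall>a b. inflation E a \<longrightarrow> deflation E b \<longrightarrow> Dm C a = Dm C b \<longrightarrow> Cd C b \<in> \<A> \<longrightarrow>
        (\<exists>P b' a'. is_pushout C a b P b' a' \<and> deflation E b' \<and> inflation E a'))"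

end

theory Submission
  imports Defs
begin

lemma homD: "f \<in> hom C X Y \<Longrightarrow> f \<in> Ar C \<and> Dm C f = X \<and> Cd C f = Y"
  by (simp add: hom_def)

lemma homI: "f \<in> Ar C \<Longrightarrow> f \<in> hom C (Dm C f) (Cd C f)"
  by (simp add: hom_def)

lemma cat_Ob: "is_category C \<Longrightarrow> f \<in> hom C X Y \<Longrightarrow> X \<in> Ob C \<and> Y \<in> Ob C"
  unfolding is_category_def hom_def by auto

lemma cat_comp: "is_category C \<Longrightarrow> f \<in> hom C X Y \<Longrightarrow> g \<in> hom C Y Z \<Longrightarrow> Cp C g f \<in> hom C X Z"
  unfolding is_category_def by blast

lemma cat_id: "is_category C \<Longrightarrow> X \<in> Ob C \<Longrightarrow> Idm C X \<in> hom C X X"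
  unfolding is_category_def by blast

lemma cat_idl: "is_category C \<Longrightarrow> f \<in> hom C X Y \<Longrightarrow> Cp C (Idm C Y) f = f"
  unfolding is_category_def by blast

lemma cat_idr: "is_category C \<Longrightarrow> f \<in> hom C X Y \<Longrightarrow> Cp C f (Idm C X) = f"
  unfolding is_category_def by blast

lemma cat_assoc: "is_category C \<Longrightarrow> f \<in> hom C W X \<Longrightarrow> g \<in> hom C X Y \<Longrightarrow> h \<in> hom C Y Z \<Longrightarrow>
        Cp C h (Cp C g f) = Cp C (Cp C h g) f"
  unfolding is_category_def by blast

lemma pre_cat: "is_preadditive C \<Longrightarrow> is_category C"
  unfolding is_preadditive_def by blast

lemma zr_hom: "is_preadditive C \<Longrightarrow> X \<in> Ob C \<Longrightarrow> Y \<in> Ob C \<Longrightarrow> Zr C X Y \<in> hom C X Y"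
  unfolding is_preadditive_def by blast

lemma pre_grp:
  assumes P: "is_preadditive C" and X: "X \<in> Ob C" and Y: "Y \<in> Ob C"
  shows "\<And>f g h. f \<in> hom C X Y \<Longrightarrow> g \<in> hom C X Y \<Longrightarrow> h \<in> hom C X Y \<Longrightarrow>
           Ad C (Ad C f g) h = Ad C f (Ad C g h)"
    and "\<And>f. f \<in> hom C X Y \<Longrightarrow> Ng C f \<in> hom C X Y"
    and "\<And>f. f \<in> hom C X Y \<Longrightarrow> Ad C f (Zr C X Y) = f"
    and "\<And>f. f \<in> hom C X Y \<Longrightarrow> Ad C f (Ng C f) = Zr C X Y"
    and "\<And>f g. f \<in> hom C X Y \<Longrightarrow> g \<in> hom C X Y \<Longrightarrow> Ad C f g \<in> hom C X Y"
    and "Zr C X Y \<in> hom C X Y"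
proof -
  have A: "\<forall>X \<in> Ob C. \<forall>Y \<in> Ob C.
        Zr C X Y \<in> hom C X Y \<and>
        (\<forall>f \<in> hom C X Y. \<forall>g \<in> hom C X Y. Ad C f g \<in> hom C X Y) \<and>
        (\<forall>f \<in> hom C X Y. Ng C f \<in> hom C X Y) \<and>
        (\<forall>f \<in> hom C X Y. \<forall>g \<in> hom C X Y. \<forall>h \<in> hom C X Y.
           Ad C (Ad C f g) h = Ad C f (Ad C g h)) \<and>
        (\<forall>f \<in> hom C X Y. \<forall>g \<in> hom C X Y. Ad C f g = Ad C g f) \<and>
        (\<forall>f \<in> hom C X Y. Ad C f (Zr C X Y) = f) \<and>
        (\<forall>f \<in> hom C X Y. Ad C f (Ng C f) = Zr C X Y)"
    using P unfolding is_preadditive_def by (elim conjE)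
  have B: "Zr C X Y \<in> hom C X Y \<and>
        (\<forall>f \<in> hom C X Y. \<forall>g \<in> hom C X Y. Ad C f g \<in> hom C X Y) \<and>
        (\<forall>f \<in> hom C X Y. Ng C f \<in> hom C X Y) \<and>
        (\<forall>f \<in> hom C X Y. \<forall>g \<in> hom C X Y. \<forall>h \<in> hom C X Y.
           Ad C (Ad C f g) h = Ad C f (Ad C g h)) \<and>
        (\<forall>f \<in> hom C X Y. \<forall>g \<in> hom C X Y. Ad C f g = Ad C g f) \<and>
        (\<forall>f \<in> hom C X Y. Ad C f (Zr C X Y) = f) \<and>
        (\<forall>f \<in> hom C X Y. Ad C f (Ng C f) = Zr C X Y)"
    by (rule bspec[OF bspec[OF A X] Y])
  show "\<And>f g h. f \<in> hom C X Y \<Longrightarrow> g \<in> hom C X Y \<Longrightarrow> h \<in> hom C X Y \<Longrightarrow>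
           Ad C (Ad C f g) h = Ad C f (Ad C g h)"
    using B by (elim conjE) (drule bspec, assumption)+
  show "\<And>f. f \<in> hom C X Y \<Longrightarrow> Ng C f \<in> hom C X Y"
    using B by (elim conjE) (drule bspec, assumption)+
  show "\<And>f. f \<in> hom C X Y \<Longrightarrow> Ad C f (Zr C X Y) = f"
    using B by (elim conjE) (drule bspec, assumption)+
  show "\<And>f. f \<in> hom C X Y \<Longrightarrow> Ad C f (Ng C f) = Zr C X Y"
    using B by (elim conjE) (drule bspec, assumption)+
  show "\<And>f g. f \<in> hom C X Y \<Longrightarrow> g \<in> hom C X Y \<Longrightarrow> Ad C f g \<in> hom C X Y"
    using B by (elim conjE) (drule bspec, assumption)+
  show "Zr C X Y \<in> hom C X Y" using B by (elim conjE)
qed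

lemma idem_zero:
  assumes P: "is_preadditive C" and X: "X \<in> Ob C" and Y: "Y \<in> Ob C"
    and a: "a \<in> hom C X Y" and e: "Ad C a a = a"
  shows "a = Zr C X Y"
proof -
  note G = pre_grp[OF P X Y]
  have n: "Ng C a \<in> hom C X Y" using G(2)[OF a] .
  have "Zr C X Y = Ad C a (Ng C a)" using G(4)[OF a] by simp
  also have "\<dots> = Ad C (Ad C a a) (Ng C a)" using e by simp
  also have "\<dots> = Ad C a (Ad C a (Ng C a))" using G(1)[OF a a n] .
  also have "\<dots> = a" using G(4)[OF a] G(3)[OF a] by simp
  finally show ?thesis by simp
qed

lemma pre_distl:
  assumes P: "is_preadditive C"
  shows "f \<in> hom C X Y \<Longrightarrow> g \<in> hom C X Y \<Longrightarrow> h \<in> hom C Y Z \<Longrightarrow>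
        Cp C h (Ad C f g) = Ad C (Cp C h f) (Cp C h g)"
proof -
  have "\<forall>X Y Z f g h. f \<in> hom C X Y \<longrightarrow> g \<in> hom C X Y \<longrightarrow> h \<in> hom C Y Z \<longrightarrow>
        Cp C h (Ad C f g) = Ad C (Cp C h f) (Cp C h g)"
    using P unfolding is_preadditive_def by (elim conjE)
  then show "f \<in> hom C X Y \<Longrightarrow> g \<in> hom C X Y \<Longrightarrow> h \<in> hom C Y Z \<Longrightarrow>
        Cp C h (Ad C f g) = Ad C (Cp C h f) (Cp C h g)" by simp
qed

lemma pre_distr:
  assumes P: "is_preadditive C"
  shows "h \<in> hom C X Y \<Longrightarrow> f \<in> hom C Y Z \<Longrightarrow> g \<in> hom C Y Z \<Longrightarrow>
        Cp C (Ad C f g) h = Ad C (Cp C f h) (Cp C g h)"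
proof -
  have "\<forall>X Y Z f g h. h \<in> hom C X Y \<longrightarrow> f \<in> hom C Y Z \<longrightarrow> g \<in> hom C Y Z \<longrightarrow>
        Cp C (Ad C f g) h = Ad C (Cp C f h) (Cp C g h)"
    using P unfolding is_preadditive_def by (elim conjE)
  then show "h \<in> hom C X Y \<Longrightarrow> f \<in> hom C Y Z \<Longrightarrow> g \<in> hom C Y Z \<Longrightarrow>
        Cp C (Ad C f g) h = Ad C (Cp C f h) (Cp C g h)" by simp
qed

lemma comp_zr_right:
  assumes P: "is_preadditive C" and X: "X \<in> Ob C" and h: "h \<in> hom C Y Z"
  shows "Cp C h (Zr C X Y) = Zr C X Z"
proof -
  have c: "is_category C" using P by (rule pre_cat)
  have Y: "Y \<in> Ob C" and Z: "Z \<in> Ob C" using cat_Ob[OF c h] by auto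
  note G = pre_grp[OF P X Y]
  have z: "Zr C X Y \<in> hom C X Y" using G(6) .
  have zz: "Ad C (Zr C X Y) (Zr C X Y) = Zr C X Y" using G(3)[OF z] .
  have "Cp C h (Ad C (Zr C X Y) (Zr C X Y)) = Ad C (Cp C h (Zr C X Y)) (Cp C h (Zr C X Y))"
    using pre_distl[OF P z z h] .
  then have "Ad C (Cp C h (Zr C X Y)) (Cp C h (Zr C X Y)) = Cp C h (Zr C X Y)" using zz by simp
  then show ?thesis using idem_zero[OF P X Z cat_comp[OF c z h]] by simp
qed

lemma comp_zr_left:
  assumes P: "is_preadditive C" and Z: "Z \<in> Ob C" and h: "h \<in> hom C X Y"
  shows "Cp C (Zr C Y Z) h = Zr C X Z"
proof -
  have c: "is_category C" using P by (rule pre_cat)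
  have X: "X \<in> Ob C" and Y: "Y \<in> Ob C" using cat_Ob[OF c h] by auto
  note G = pre_grp[OF P Y Z]
  have z: "Zr C Y Z \<in> hom C Y Z" using G(6) .
  have zz: "Ad C (Zr C Y Z) (Zr C Y Z) = Zr C Y Z" using G(3)[OF z] .
  have "Cp C (Ad C (Zr C Y Z) (Zr C Y Z)) h = Ad C (Cp C (Zr C Y Z) h) (Cp C (Zr C Y Z) h)"
    using pre_distr[OF P h z z] .
  then have "Ad C (Cp C (Zr C Y Z) h) (Cp C (Zr C Y Z) h) = Cp C (Zr C Y Z) h" using zz by simp
  then show ?thesis using idem_zero[OF P X Z cat_comp[OF c h z]] by simp
qed

lemma kerD:
  assumes "is_kernel C f g"
  shows "f \<in> Ar C" "g \<in> Ar C" "Cd C f = Dm C g" "Cp C g f = Zr C (Dm C f) (Cd C g)"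
    "\<And>T h. h \<in> hom C T (Dm C g) \<Longrightarrow> Cp C g h = Zr C T (Cd C g) \<Longrightarrow>
        (\<exists>!u. u \<in> hom C T (Dm C f) \<and> Cp C f u = h)"
proof -
  have H: "f \<in> Ar C \<and> g \<in> Ar C \<and> Cd C f = Dm C g \<and>
     Cp C g f = Zr C (Dm C f) (Cd C g) \<and>
     (\<forall>T h. h \<in> hom C T (Dm C g) \<longrightarrow> Cp C g h = Zr C T (Cd C g) \<longrightarrow>
        (\<exists>!u. u \<in> hom C T (Dm C f) \<and> Cp C f u = h))"
    using assms unfolding is_kernel_def .
  show "f \<in> Ar C" using H by (rule conjunct1)
  show "g \<in> Ar C" using H by (elim conjE)
  show "Cd C f = Dm C g" using H by (elim conjE)
  show "Cp C g f = Zr C (Dm C f) (Cd C g)" using H by (elim conjE)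
  have U: "\<forall>T h. h \<in> hom C T (Dm C g) \<longrightarrow> Cp C g h = Zr C T (Cd C g) \<longrightarrow>
        (\<exists>!u. u \<in> hom C T (Dm C f) \<and> Cp C f u = h)" using H by (elim conjE)
  show "\<And>T h. h \<in> hom C T (Dm C g) \<Longrightarrow> Cp C g h = Zr C T (Cd C g) \<Longrightarrow>
        (\<exists>!u. u \<in> hom C T (Dm C f) \<and> Cp C f u = h)"
  proof -
    fix T h assume "h \<in> hom C T (Dm C g)" "Cp C g h = Zr C T (Cd C g)"
    then show "\<exists>!u. u \<in> hom C T (Dm C f) \<and> Cp C f u = h" using spec[OF spec[OF U, of T], of h] by (elim impE)
  qed
qed

lemma cokD:
  assumes "is_cokernel C g f"
  shows "f \<in> Ar C" "g \<in> Ar C" "Cd C f = Dm C g" "Cp C g f = Zr C (Dm C f) (Cd C g)"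
    "\<And>T h. h \<in> hom C (Cd C f) T \<Longrightarrow> Cp C h f = Zr C (Dm C f) T \<Longrightarrow>
        (\<exists>!u. u \<in> hom C (Cd C g) T \<and> Cp C u g = h)"
proof -
  have H: "f \<in> Ar C \<and> g \<in> Ar C \<and> Cd C f = Dm C g \<and>
     Cp C g f = Zr C (Dm C f) (Cd C g) \<and>
     (\<forall>T h. h \<in> hom C (Cd C f) T \<longrightarrow> Cp C h f = Zr C (Dm C f) T \<longrightarrow>
        (\<exists>!u. u \<in> hom C (Cd C g) T \<and> Cp C u g = h))"
    using assms unfolding is_cokernel_def .
  show "f \<in> Ar C" using H by (rule conjunct1)
  show "g \<in> Ar C" using H by (elim conjE)
  show "Cd C f = Dm C g" using H by (elim conjE)
  show "Cp C g f = Zr C (Dm C f) (Cd C g)" using H by (elim conjE)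
  have U: "\<forall>T h. h \<in> hom C (Cd C f) T \<longrightarrow> Cp C h f = Zr C (Dm C f) T \<longrightarrow>
        (\<exists>!u. u \<in> hom C (Cd C g) T \<and> Cp C u g = h)" using H by (elim conjE)
  show "\<And>T h. h \<in> hom C (Cd C f) T \<Longrightarrow> Cp C h f = Zr C (Dm C f) T \<Longrightarrow>
        (\<exists>!u. u \<in> hom C (Cd C g) T \<and> Cp C u g = h)"
  proof -
    fix T h assume "h \<in> hom C (Cd C f) T" "Cp C h f = Zr C (Dm C f) T"
    then show "\<exists>!u. u \<in> hom C (Cd C g) T \<and> Cp C u g = h" using spec[OF spec[OF U, of T], of h] by (elim impE)
  qed
qed

lemma uniq1: "\<exists>!x. P x \<Longrightarrow> P a \<Longrightarrow> P b \<Longrightarrow> a = b"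
  by blast

lemma kernel_mono:
  assumes P: "is_preadditive C" and k: "is_kernel C f g"
  shows "is_mono C f"
proof -
  have c: "is_category C" using P by (rule pre_cat)
  have fA: "f \<in> Ar C" and gA: "g \<in> Ar C" and cd: "Cd C f = Dm C g"
    and gf: "Cp C g f = Zr C (Dm C f) (Cd C g)"
    and U: "\<And>T h. h \<in> hom C T (Dm C g) \<Longrightarrow> Cp C g h = Zr C T (Cd C g) \<Longrightarrow>
        (\<exists>!u. u \<in> hom C T (Dm C f) \<and> Cp C f u = h)"
    using kerD[OF k] by this+
  have fh: "f \<in> hom C (Dm C f) (Dm C g)" using homI[OF fA] cd by simp
  have gh: "g \<in> hom C (Dm C g) (Cd C g)" using homI[OF gA] .
  show ?thesis unfolding is_mono_def
  proof (intro conjI fA allI impI)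
    fix T u v assume u: "u \<in> hom C T (Dm C f)" and v: "v \<in> hom C T (Dm C f)"
      and e: "Cp C f u = Cp C f v"
    have T: "T \<in> Ob C" using cat_Ob[OF c u] by blast
    have fu: "Cp C f u \<in> hom C T (Dm C g)" using cat_comp[OF c u fh] .
    have "Cp C g (Cp C f u) = Cp C (Cp C g f) u" using cat_assoc[OF c u fh gh] .
    also have "\<dots> = Zr C T (Cd C g)" using gf comp_zr_left[OF P _ u] cat_Ob[OF c gh] by simp
    finally have z: "Cp C g (Cp C f u) = Zr C T (Cd C g)" .
    show "u = v" by (rule uniq1[OF U[OF fu z]]) (use u v e in simp_all)
  qed
qed

lemma cokernel_epi:
  assumes P: "is_preadditive C" and k: "is_cokernel C g f"
  shows "is_epi C g"
proof -
  have c: "is_category C" using P by (rule pre_cat)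
  have fA: "f \<in> Ar C" and gA: "g \<in> Ar C" and cd: "Cd C f = Dm C g"
    and gf: "Cp C g f = Zr C (Dm C f) (Cd C g)"
    and U: "\<And>T h. h \<in> hom C (Cd C f) T \<Longrightarrow> Cp C h f = Zr C (Dm C f) T \<Longrightarrow>
        (\<exists>!u. u \<in> hom C (Cd C g) T \<and> Cp C u g = h)"
    using cokD[OF k] by this+
  have fh: "f \<in> hom C (Dm C f) (Cd C f)" using homI[OF fA] by simp
  have gh: "g \<in> hom C (Cd C f) (Cd C g)" using homI[OF gA] cd by simp
  show ?thesis unfolding is_epi_def
  proof (intro conjI gA allI impI)
    fix T u v assume u: "u \<in> hom C (Cd C g) T" and v: "v \<in> hom C (Cd C g) T"
      and e: "Cp C u g = Cp C v g"
    have T: "T \<in> Ob C" using cat_Ob[OF c u] by blast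
    have ug: "Cp C u g \<in> hom C (Cd C f) T" using cat_comp[OF c gh u] .
    have "Cp C (Cp C u g) f = Cp C u (Cp C g f)" using cat_assoc[OF c fh gh u] by simp
    also have "\<dots> = Zr C (Dm C f) T" using gf comp_zr_right[OF P _ u] cat_Ob[OF c fh] by simp
    finally have z: "Cp C (Cp C u g) f = Zr C (Dm C f) T" .
    show "u = v" by (rule uniq1[OF U[OF ug z]]) (use u v e in simp_all)
  qed
qed


lemma cc_pre: "conflation_category C E \<Longrightarrow> is_preadditive C"
  unfolding conflation_category_def is_additive_def by blast

lemma cc_kcp: "conflation_category C E \<Longrightarrow> (f, g) \<in> E \<Longrightarrow> kernel_cokernel_pair C f g"
  unfolding conflation_category_def by blast

lemma cc_closed:
  assumes "conflation_category C E" "(f, g) \<in> E" "kernel_cokernel_pair C f' g'"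
    "a \<in> hom C (Dm C f) (Dm C f')" "b \<in> hom C (Cd C f) (Cd C f')"
    "c \<in> hom C (Cd C g) (Cd C g')" "is_iso C a" "is_iso C b" "is_iso C c"
    "Cp C b f = Cp C f' a" "Cp C c g = Cp C g' b"
  shows "(f', g') \<in> E"
proof -
  have "\<forall>f g f' g' a b c. (f, g) \<in> E \<longrightarrow> kernel_cokernel_pair C f' g' \<longrightarrow>
        a \<in> hom C (Dm C f) (Dm C f') \<longrightarrow> b \<in> hom C (Cd C f) (Cd C f') \<longrightarrow>
        c \<in> hom C (Cd C g) (Cd C g') \<longrightarrow>
        is_iso C a \<longrightarrow> is_iso C b \<longrightarrow> is_iso C c \<longrightarrow>
        Cp C b f = Cp C f' a \<longrightarrow> Cp C c g = Cp C g' b \<longrightarrow> (f', g') \<in> E"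
    using assms(1) unfolding conflation_category_def by blast
  then show ?thesis using assms(2-) by blast
qed

lemma iso_id: "is_category C \<Longrightarrow> X \<in> Ob C \<Longrightarrow> is_iso C (Idm C X)"
  unfolding is_iso_def using cat_id cat_idl homD by metis

lemma iso_intro: "is_category C \<Longrightarrow> a \<in> hom C X Y \<Longrightarrow> a' \<in> hom C Y X \<Longrightarrow>
  Cp C a' a = Idm C X \<Longrightarrow> Cp C a a' = Idm C Y \<Longrightarrow> is_iso C a"
  unfolding is_iso_def using homD by metis

lemma iso_D:
  assumes "is_iso C a"
  obtains a' where "a \<in> hom C (Dm C a) (Cd C a)" "a' \<in> hom C (Cd C a) (Dm C a)"
    "Cp C a' a = Idm C (Dm C a)" "Cp C a a' = Idm C (Cd C a)"
proof -
  have H: "a \<in> Ar C \<and> (\<exists>g \<in> hom C (Cd C a) (Dm C a). Cp C g a = Idm C (Dm C a) \<and> Cp C a g = Idm C (Cd C a))"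
    using assms unfolding is_iso_def .
  have aA: "a \<in> Ar C" using H by (rule conjunct1)
  have ex: "\<exists>g \<in> hom C (Cd C a) (Dm C a). Cp C g a = Idm C (Dm C a) \<and> Cp C a g = Idm C (Cd C a)"
    using H by (rule conjunct2)
  from ex obtain g where "g \<in> hom C (Cd C a) (Dm C a)" "Cp C g a = Idm C (Dm C a)" "Cp C a g = Idm C (Cd C a)"
    by (elim bexE conjE)
  then show ?thesis using that homI[OF aA] by simp
qed

lemma mono_comp_right:
  assumes c: "is_category C" and d: "d \<in> hom C X Y" and i: "i \<in> hom C Y Z"
    and m: "is_mono C (Cp C i d)"
  shows "is_mono C d"
proof -
  have id: "Cp C i d \<in> hom C X Z" using cat_comp[OF c d i] .
  have M: "\<And>T g h. g \<in> hom C T X \<Longrightarrow> h \<in> hom C T X \<Longrightarrow> Cp C (Cp C i d) g = Cp C (Cp C i d) h \<Longrightarrow> g = h"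
    using m homD[OF id] unfolding is_mono_def by auto
  show ?thesis unfolding is_mono_def
  proof (intro conjI allI impI)
    show "d \<in> Ar C" using homD[OF d] by blast
    fix T u v assume u: "u \<in> hom C T (Dm C d)" and v: "v \<in> hom C T (Dm C d)" and e: "Cp C d u = Cp C d v"
    have u': "u \<in> hom C T X" and v': "v \<in> hom C T X" using u v homD[OF d] by auto
    have "Cp C (Cp C i d) u = Cp C (Cp C i d) v"
      using e cat_assoc[OF c u' d i] cat_assoc[OF c v' d i] by metis
    then show "u = v" using M[OF u' v'] by blast
  qed
qed

lemma epi_comp_left:
  assumes c: "is_category C" and d: "d \<in> hom C X Y" and i: "i \<in> hom C Y Z"
    and m: "is_epi C (Cp C i d)"
  shows "is_epi C i"
proof -
  have id: "Cp C i d \<in> hom C X Z" using cat_comp[OF c d i] .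
  have M: "\<And>T g h. g \<in> hom C Z T \<Longrightarrow> h \<in> hom C Z T \<Longrightarrow> Cp C g (Cp C i d) = Cp C h (Cp C i d) \<Longrightarrow> g = h"
    using m homD[OF id] unfolding is_epi_def by auto
  show ?thesis unfolding is_epi_def
  proof (intro conjI allI impI)
    show "i \<in> Ar C" using homD[OF i] by blast
    fix T u v assume u: "u \<in> hom C (Cd C i) T" and v: "v \<in> hom C (Cd C i) T" and e: "Cp C u i = Cp C v i"
    have u': "u \<in> hom C Z T" and v': "v \<in> hom C Z T" using u v homD[OF i] by auto
    have "Cp C u (Cp C i d) = Cp C v (Cp C i d)"
      using e cat_assoc[OF c d i u'] cat_assoc[OF c d i v'] by metis
    then show "u = v" using M[OF u' v'] by blast
  qed
qed

lemma kernel_epi_iso: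
  assumes P: "is_preadditive C" and k: "is_kernel C i g" and ep: "is_epi C i"
  shows "is_iso C i"
proof -
  have c: "is_category C" using P by (rule pre_cat)
  have iA: "i \<in> Ar C" and gA: "g \<in> Ar C" and cd: "Cd C i = Dm C g"
    and gi: "Cp C g i = Zr C (Dm C i) (Cd C g)"
    and U: "\<And>T h. h \<in> hom C T (Dm C g) \<Longrightarrow> Cp C g h = Zr C T (Cd C g) \<Longrightarrow>
        (\<exists>!u. u \<in> hom C T (Dm C i) \<and> Cp C i u = h)"
    using kerD[OF k] by this+
  define Y where "Y = Dm C g"
  have ih: "i \<in> hom C (Dm C i) Y" using homI[OF iA] cd Y_def by simp
  have gh: "g \<in> hom C Y (Cd C g)" using homI[OF gA] Y_def by simp
  have Ob: "Dm C i \<in> Ob C" "Y \<in> Ob C" "Cd C g \<in> Ob C" using cat_Ob[OF c ih] cat_Ob[OF c gh] by auto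
  have E: "\<And>T u v. u \<in> hom C Y T \<Longrightarrow> v \<in> hom C Y T \<Longrightarrow> Cp C u i = Cp C v i \<Longrightarrow> u = v"
    using ep cd Y_def unfolding is_epi_def by auto
  have z: "Zr C Y (Cd C g) \<in> hom C Y (Cd C g)" using zr_hom[OF P Ob(2,3)] .
  have "Cp C g i = Cp C (Zr C Y (Cd C g)) i" using gi comp_zr_left[OF P Ob(3) ih] by simp
  then have g0: "g = Zr C Y (Cd C g)" using E[OF gh z] by blast
  have idY: "Idm C Y \<in> hom C Y Y" using cat_id[OF c Ob(2)] .
  have "Cp C g (Idm C Y) = Zr C Y (Cd C g)" using cat_idr[OF c gh] g0 by simp
  then have "\<exists>!u. u \<in> hom C Y (Dm C i) \<and> Cp C i u = Idm C Y" using U[of "Idm C Y" Y] idY Y_def by simp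
  then obtain u where u: "u \<in> hom C Y (Dm C i)" and iu: "Cp C i u = Idm C Y" by blast
  have ui: "Cp C u i \<in> hom C (Dm C i) (Dm C i)" using cat_comp[OF c ih u] .
  have idX: "Idm C (Dm C i) \<in> hom C (Dm C i) (Dm C i)" using cat_id[OF c Ob(1)] .
  have "Cp C i (Cp C u i) = Cp C (Cp C i u) i" using cat_assoc[OF c ih u ih] .
  also have "\<dots> = i" using iu cat_idl[OF c ih] by simp
  also have "\<dots> = Cp C i (Idm C (Dm C i))" using cat_idr[OF c ih] by simp
  finally have "Cp C u i = Idm C (Dm C i)"
    using kernel_mono[OF P k] ui idX unfolding is_mono_def by blast
  then show ?thesis using iso_intro[OF c ih u] iu by blast
qed

lemma cokernel_mono_iso:
  assumes P: "is_preadditive C" and k: "is_cokernel C d k" and mo: "is_mono C d"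
  shows "is_iso C d"
proof -
  have c: "is_category C" using P by (rule pre_cat)
  have kA: "k \<in> Ar C" and dA: "d \<in> Ar C" and cd: "Cd C k = Dm C d"
    and dk: "Cp C d k = Zr C (Dm C k) (Cd C d)"
    and U: "\<And>T h. h \<in> hom C (Cd C k) T \<Longrightarrow> Cp C h k = Zr C (Dm C k) T \<Longrightarrow>
        (\<exists>!u. u \<in> hom C (Cd C d) T \<and> Cp C u d = h)"
    using cokD[OF k] by this+
  define Y where "Y = Dm C d"
  have kh: "k \<in> hom C (Dm C k) Y" using homI[OF kA] cd Y_def by simp
  have dh: "d \<in> hom C Y (Cd C d)" using homI[OF dA] Y_def by simp
  have Ob: "Dm C k \<in> Ob C" "Y \<in> Ob C" "Cd C d \<in> Ob C" using cat_Ob[OF c kh] cat_Ob[OF c dh] by auto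
  have M: "\<And>T u v. u \<in> hom C T Y \<Longrightarrow> v \<in> hom C T Y \<Longrightarrow> Cp C d u = Cp C d v \<Longrightarrow> u = v"
    using mo Y_def unfolding is_mono_def by auto
  have z: "Zr C (Dm C k) Y \<in> hom C (Dm C k) Y" using zr_hom[OF P Ob(1,2)] .
  have "Cp C d k = Cp C d (Zr C (Dm C k) Y)" using dk comp_zr_right[OF P Ob(1) dh] by simp
  then have k0: "k = Zr C (Dm C k) Y" using M[OF kh z] by blast
  have idY: "Idm C Y \<in> hom C Y Y" using cat_id[OF c Ob(2)] .
  have "Cp C (Idm C Y) k = Zr C (Dm C k) Y" using cat_idl[OF c kh] k0 by simp
  then have "\<exists>!u. u \<in> hom C (Cd C d) Y \<and> Cp C u d = Idm C Y" using U[of "Idm C Y" Y] idY Y_def cd by simp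
  then obtain u where u: "u \<in> hom C (Cd C d) Y" and ud: "Cp C u d = Idm C Y" by blast
  have du: "Cp C d u \<in> hom C (Cd C d) (Cd C d)" using cat_comp[OF c u dh] .
  have idX: "Idm C (Cd C d) \<in> hom C (Cd C d) (Cd C d)" using cat_id[OF c Ob(3)] .
  have "Cp C (Cp C d u) d = Cp C d (Cp C u d)" using cat_assoc[OF c dh u dh] by simp
  also have "\<dots> = d" using ud cat_idr[OF c dh] by simp
  also have "\<dots> = Cp C (Idm C (Cd C d)) d" using cat_idl[OF c dh] by simp
  finally have "Cp C d u = Idm C (Cd C d)"
    using cokernel_epi[OF P k] du idX unfolding is_epi_def by blast
  then show ?thesis using iso_intro[OF c dh u] ud by blast
qed


lemma infl_iso:
  assumes CC: "conflation_category C E" and ig: "(i, g) \<in> E" and a: "is_iso C a"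
    and cda: "Cd C a = Dm C i"
  shows "(Cp C i a, g) \<in> E"
proof -
  have P: "is_preadditive C" using cc_pre[OF CC] .
  have c: "is_category C" using P by (rule pre_cat)
  have kcp: "kernel_cokernel_pair C i g" using cc_kcp[OF CC ig] .
  have kk: "is_kernel C i g" using kcp unfolding kernel_cokernel_pair_def by (rule conjunct1)
  have kc: "is_cokernel C g i" using kcp unfolding kernel_cokernel_pair_def by (rule conjunct2)
  note iA = kerD(1)[OF kk] and gA = kerD(2)[OF kk] and cd = kerD(3)[OF kk] and gi = kerD(4)[OF kk] and UK = kerD(5)[OF kk] and UC = cokD(5)[OF kc]
  obtain a' where ah: "a \<in> hom C (Dm C a) (Cd C a)" and a'h: "a' \<in> hom C (Cd C a) (Dm C a)"
    and a'a: "Cp C a' a = Idm C (Dm C a)" and aa': "Cp C a a' = Idm C (Cd C a)"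
    using iso_D[OF a] by blast
  define X where "X = Dm C a"
  define Y where "Y = Dm C i"
  define B where "B = Dm C g"
  define D where "D = Cd C g"
  have ah: "a \<in> hom C X Y" using ah X_def Y_def cda by simp
  have a'h: "a' \<in> hom C Y X" using a'h X_def Y_def cda by simp
  have a'a: "Cp C a' a = Idm C X" using a'a X_def by simp
  have aa': "Cp C a a' = Idm C Y" using aa' Y_def cda by simp
  have ih: "i \<in> hom C Y B" using homI[OF iA] Y_def B_def cd by simp
  have gh: "g \<in> hom C B D" using homI[OF gA] B_def D_def by simp
  have Ob: "X \<in> Ob C" "Y \<in> Ob C" "B \<in> Ob C" "D \<in> Ob C"
    using cat_Ob[OF c ah] cat_Ob[OF c ih] cat_Ob[OF c gh] by auto
  define f where "f = Cp C i a"
  have fh: "f \<in> hom C X B" using cat_comp[OF c ah ih] f_def by simp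
  have fD: "f \<in> Ar C" "Dm C f = X" "Cd C f = B" using homD[OF fh] by auto
  have gf: "Cp C g f = Zr C X D"
  proof -
    have "Cp C g f = Cp C (Cp C g i) a" using cat_assoc[OF c ah ih gh] f_def by simp
    also have "\<dots> = Zr C X D" using gi Y_def D_def comp_zr_left[OF P Ob(4) ah] by simp
    finally show ?thesis .
  qed
  have ker: "is_kernel C f g" unfolding is_kernel_def
  proof (intro conjI allI impI)
    show "f \<in> Ar C" "g \<in> Ar C" "Cd C f = Dm C g" using fD gA B_def by auto
    show "Cp C g f = Zr C (Dm C f) (Cd C g)" using gf fD D_def by simp
    fix T h assume h: "h \<in> hom C T (Dm C g)" and gh0: "Cp C g h = Zr C T (Cd C g)"
    have "\<exists>!u. u \<in> hom C T Y \<and> Cp C i u = h" using UK[OF h gh0] Y_def by simp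
    then obtain u' where u'P: "u' \<in> hom C T Y \<and> Cp C i u' = h"
      and un0: "\<forall>w. w \<in> hom C T Y \<and> Cp C i w = h \<longrightarrow> w = u'" by (rule ex1E)
    have u': "u' \<in> hom C T Y" "Cp C i u' = h" using u'P by auto
    have un: "\<And>w. w \<in> hom C T Y \<Longrightarrow> Cp C i w = h \<Longrightarrow> w = u'" using un0 by simp
    show "\<exists>!u. u \<in> hom C T (Dm C f) \<and> Cp C f u = h"
    proof (rule ex1I[of _ "Cp C a' u'"])
      have m: "Cp C a' u' \<in> hom C T X" using cat_comp[OF c u'(1) a'h] .
      have "Cp C f (Cp C a' u') = Cp C i (Cp C a (Cp C a' u'))"
        using cat_assoc[OF c m ah ih] f_def by simp
      also have "\<dots> = Cp C i (Cp C (Cp C a a') u')" using cat_assoc[OF c u'(1) a'h ah] by simp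
      also have "\<dots> = h" using aa' cat_idl[OF c u'(1)] u'(2) by simp
      finally show "Cp C a' u' \<in> hom C T (Dm C f) \<and> Cp C f (Cp C a' u') = h" using m fD by simp
    next
      fix v assume v: "v \<in> hom C T (Dm C f) \<and> Cp C f v = h"
      have vh: "v \<in> hom C T X" using v fD by simp
      have av: "Cp C a v \<in> hom C T Y" using cat_comp[OF c vh ah] .
      have "Cp C i (Cp C a v) = h" using v cat_assoc[OF c vh ah ih] f_def by simp
      then have avu: "Cp C a v = u'" using un[OF av] by blast
      have "v = Cp C (Idm C X) v" using cat_idl[OF c vh] by simp
      also have "\<dots> = Cp C a' (Cp C a v)" using a'a cat_assoc[OF c vh ah a'h] by simp
      finally show "v = Cp C a' u'" using avu by simp
    qed
  qed
  have cok: "is_cokernel C g f" unfolding is_cokernel_def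
  proof (intro conjI allI impI)
    show "f \<in> Ar C" "g \<in> Ar C" "Cd C f = Dm C g" using fD gA B_def by auto
    show "Cp C g f = Zr C (Dm C f) (Cd C g)" using gf fD D_def by simp
    fix T h assume h: "h \<in> hom C (Cd C f) T" and hf0: "Cp C h f = Zr C (Dm C f) T"
    have hB: "h \<in> hom C B T" using h fD by simp
    have T: "T \<in> Ob C" using cat_Ob[OF c hB] by blast
    have "Cp C h i = Cp C (Cp C h i) (Idm C Y)" using cat_idr[OF c cat_comp[OF c ih hB]] by simp
    also have "\<dots> = Cp C (Cp C h i) (Cp C a a')" using aa' by simp
    also have "\<dots> = Cp C (Cp C (Cp C h i) a) a'" using cat_assoc[OF c a'h ah cat_comp[OF c ih hB]] by simp
    also have "\<dots> = Cp C (Cp C h f) a'" using cat_assoc[OF c ah ih hB] f_def by simp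
    also have "\<dots> = Zr C Y T" using hf0 fD comp_zr_left[OF P T a'h] by simp
    finally have z: "Cp C h i = Zr C (Dm C i) T" using Y_def by simp
    have hh: "h \<in> hom C (Cd C i) T" using hB B_def cd by simp
    show "\<exists>!u. u \<in> hom C (Cd C g) T \<and> Cp C u g = h" by (rule UC[OF hh z])
  qed
  have kcp': "kernel_cokernel_pair C f g" using ker cok unfolding kernel_cokernel_pair_def by (rule conjI)
  have isa': "is_iso C a'" using iso_intro[OF c a'h ah aa' a'a] .
  have "Cp C (Idm C B) i = Cp C f a'"
  proof -
    have "Cp C f a' = Cp C i (Cp C a a')" using cat_assoc[OF c a'h ah ih] f_def by simp
    also have "\<dots> = i" using aa' cat_idr[OF c ih] by simp
    finally show ?thesis using cat_idl[OF c ih] by simp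
  qed
  note e1 = this
  have e2: "Cp C (Idm C D) g = Cp C g (Idm C B)" using cat_idl[OF c gh] cat_idr[OF c gh] by simp
  have h1: "a' \<in> hom C (Dm C i) (Dm C f)" using a'h Y_def fD by simp
  have h2: "Idm C B \<in> hom C (Cd C i) (Cd C f)" using cat_id[OF c Ob(3)] fD B_def cd by simp
  have h3: "Idm C D \<in> hom C (Cd C g) (Cd C g)" using cat_id[OF c Ob(4)] D_def by simp
  have "(f, g) \<in> E"
    using cc_closed[OF CC ig kcp' h1 h2 h3 isa' iso_id[OF c Ob(3)] iso_id[OF c Ob(4)] e1 e2] .
  then show ?thesis using f_def by simp
qed


lemma defl_iso:
  assumes CC: "conflation_category C E" and kd: "(k, d) \<in> E" and ci: "is_iso C c"
    and dmc: "Dm C c = Cd C d"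
  shows "(k, Cp C c d) \<in> E"
proof -
  have P: "is_preadditive C" using cc_pre[OF CC] .
  have cat: "is_category C" using P by (rule pre_cat)
  have kcp: "kernel_cokernel_pair C k d" using cc_kcp[OF CC kd] .
  have kk: "is_kernel C k d" using kcp unfolding kernel_cokernel_pair_def by (rule conjunct1)
  have kc: "is_cokernel C d k" using kcp unfolding kernel_cokernel_pair_def by (rule conjunct2)
  note kA = kerD(1)[OF kk] and dA = kerD(2)[OF kk] and cd = kerD(3)[OF kk] and dk = kerD(4)[OF kk] and UK = kerD(5)[OF kk] and UC = cokD(5)[OF kc]
  obtain c' where ch: "c \<in> hom C (Dm C c) (Cd C c)" and c'h: "c' \<in> hom C (Cd C c) (Dm C c)"
    and c'c: "Cp C c' c = Idm C (Dm C c)" and cc': "Cp C c c' = Idm C (Cd C c)"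
    using iso_D[OF ci] by blast
  define K where "K = Dm C k"
  define B where "B = Dm C d"
  define Y where "Y = Cd C d"
  define W where "W = Cd C c"
  have ch: "c \<in> hom C Y W" using ch Y_def W_def dmc by simp
  have c'h: "c' \<in> hom C W Y" using c'h Y_def W_def dmc by simp
  have c'c: "Cp C c' c = Idm C Y" using c'c Y_def dmc by simp
  have cc': "Cp C c c' = Idm C W" using cc' W_def by simp
  have kh: "k \<in> hom C K B" using homI[OF kA] K_def B_def cd by simp
  have dh: "d \<in> hom C B Y" using homI[OF dA] B_def Y_def by simp
  have Ob: "K \<in> Ob C" "B \<in> Ob C" "Y \<in> Ob C" "W \<in> Ob C"
    using cat_Ob[OF cat kh] cat_Ob[OF cat dh] cat_Ob[OF cat ch] by auto
  define g where "g = Cp C c d"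
  have gh: "g \<in> hom C B W" using cat_comp[OF cat dh ch] g_def by simp
  have gD: "g \<in> Ar C" "Dm C g = B" "Cd C g = W" using homD[OF gh] by auto
  have gk: "Cp C g k = Zr C K W"
  proof -
    have "Cp C g k = Cp C c (Cp C d k)" using cat_assoc[OF cat kh dh ch] g_def by simp
    also have "\<dots> = Zr C K W" using dk K_def Y_def comp_zr_right[OF P Ob(1) ch] by simp
    finally show ?thesis .
  qed
  have ker: "is_kernel C k g" unfolding is_kernel_def
  proof (intro conjI allI impI)
    show "k \<in> Ar C" "g \<in> Ar C" "Cd C k = Dm C g" using kA gD cd B_def by auto
    show "Cp C g k = Zr C (Dm C k) (Cd C g)" using gk gD K_def by simp
    fix T h assume h: "h \<in> hom C T (Dm C g)" and gh0: "Cp C g h = Zr C T (Cd C g)"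
    have hB: "h \<in> hom C T B" using h gD by simp
    have T: "T \<in> Ob C" using cat_Ob[OF cat hB] by blast
    have dhh: "Cp C d h \<in> hom C T Y" using cat_comp[OF cat hB dh] .
    have "Cp C d h = Cp C (Idm C Y) (Cp C d h)" using cat_idl[OF cat dhh] by simp
    also have "\<dots> = Cp C (Cp C c' c) (Cp C d h)" using c'c by simp
    also have "\<dots> = Cp C c' (Cp C c (Cp C d h))" using cat_assoc[OF cat dhh ch c'h] by simp
    also have "\<dots> = Cp C c' (Cp C g h)" using cat_assoc[OF cat hB dh ch] g_def by simp
    also have "\<dots> = Zr C T Y" using gh0 gD comp_zr_right[OF P T c'h] by simp
    finally have z: "Cp C d h = Zr C T (Cd C d)" using Y_def by simp
    have hh: "h \<in> hom C T (Dm C d)" using hB B_def by simp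
    show "\<exists>!u. u \<in> hom C T (Dm C k) \<and> Cp C k u = h" by (rule UK[OF hh z])
  qed
  have cok: "is_cokernel C g k" unfolding is_cokernel_def
  proof (intro conjI allI impI)
    show "k \<in> Ar C" "g \<in> Ar C" "Cd C k = Dm C g" using kA gD cd B_def by auto
    show "Cp C g k = Zr C (Dm C k) (Cd C g)" using gk gD K_def by simp
    fix T h assume h: "h \<in> hom C (Cd C k) T" and hk0: "Cp C h k = Zr C (Dm C k) T"
    have "\<exists>!u. u \<in> hom C Y T \<and> Cp C u d = h" using UC[OF h hk0] Y_def by simp
    then obtain u' where u'P: "u' \<in> hom C Y T \<and> Cp C u' d = h"
      and un0: "\<forall>w. w \<in> hom C Y T \<and> Cp C w d = h \<longrightarrow> w = u'" by (rule ex1E)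
    have u': "u' \<in> hom C Y T" "Cp C u' d = h" using u'P by auto
    have un: "\<And>w. w \<in> hom C Y T \<Longrightarrow> Cp C w d = h \<Longrightarrow> w = u'" using un0 by simp
    show "\<exists>!u. u \<in> hom C (Cd C g) T \<and> Cp C u g = h"
    proof (rule ex1I[of _ "Cp C u' c'"])
      have m: "Cp C u' c' \<in> hom C W T" using cat_comp[OF cat c'h u'(1)] .
      have "Cp C (Cp C u' c') g = Cp C u' (Cp C c' g)"
        using cat_assoc[OF cat gh c'h u'(1)] by simp
      also have "\<dots> = Cp C u' (Cp C (Cp C c' c) d)" using cat_assoc[OF cat dh ch c'h] g_def by simp
      also have "\<dots> = h" using c'c cat_idl[OF cat dh] u'(2) by simp
      finally show "Cp C u' c' \<in> hom C (Cd C g) T \<and> Cp C (Cp C u' c') g = h" using m gD by simp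
    next
      fix v assume v: "v \<in> hom C (Cd C g) T \<and> Cp C v g = h"
      have vh: "v \<in> hom C W T" using v gD by simp
      have vc: "Cp C v c \<in> hom C Y T" using cat_comp[OF cat ch vh] .
      have "Cp C (Cp C v c) d = h" using v cat_assoc[OF cat dh ch vh] g_def by simp
      then have vcu: "Cp C v c = u'" using un[OF vc] by blast
      have "v = Cp C v (Idm C W)" using cat_idr[OF cat vh] by simp
      also have "\<dots> = Cp C (Cp C v c) c'" using cc' cat_assoc[OF cat c'h ch vh] by simp
      finally show "v = Cp C u' c'" using vcu by simp
    qed
  qed
  have kcp': "kernel_cokernel_pair C k g" using ker cok unfolding kernel_cokernel_pair_def by (rule conjI)
  have e1: "Cp C (Idm C B) k = Cp C k (Idm C K)" using cat_idl[OF cat kh] cat_idr[OF cat kh] by simp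
  have e2: "Cp C c d = Cp C g (Idm C B)" using cat_idr[OF cat gh] g_def by simp
  have h1: "Idm C K \<in> hom C (Dm C k) (Dm C k)" using cat_id[OF cat Ob(1)] K_def by simp
  have h2: "Idm C B \<in> hom C (Cd C k) (Cd C k)" using cat_id[OF cat Ob(2)] B_def cd by simp
  have h3: "c \<in> hom C (Cd C d) (Cd C g)" using ch Y_def gD by simp
  have "(k, g) \<in> E"
    using cc_closed[OF CC kd kcp' h1 h2 h3 iso_id[OF cat Ob(1)] iso_id[OF cat Ob(2)] ci e1 e2] .
  then show ?thesis using g_def by simp
qed


lemma defl_D: "deflation E d \<Longrightarrow> \<exists>k. (k, d) \<in> E"
  unfolding deflation_def .

lemma infl_D: "inflation E i \<Longrightarrow> \<exists>g. (i, g) \<in> E"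
  unfolding inflation_def .

lemma adm_A2:
  assumes "adm_deflation_percolating C E \<A>" "A \<in> \<A>" "h \<in> hom C X A"
  shows "\<exists>A' d i. A' \<in> \<A> \<and> d \<in> hom C X A' \<and> i \<in> hom C A' A \<and>
           deflation E d \<and> inflation E i \<and> Cp C i d = h"
proof -
  have "\<forall>X A h. A \<in> \<A> \<longrightarrow> h \<in> hom C X A \<longrightarrow>
        (\<exists>A' d i. A' \<in> \<A> \<and> d \<in> hom C X A' \<and> i \<in> hom C A' A \<and>
           deflation E d \<and> inflation E i \<and> Cp C i d = h)"
    using assms(1) unfolding adm_deflation_percolating_def by (elim conjE)
  then show ?thesis using assms(2,3) by blast
qed

lemma part1:
  assumes CC: "conflation_category C E" and AD: "adm_deflation_percolating C E \<A>"
    and A: "A \<in> \<A>" and f: "f \<in> hom C X A"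
  shows "(is_mono C f \<longrightarrow> inflation E f) \<and> (is_epi C f \<longrightarrow> deflation E f)"
proof -
  have P: "is_preadditive C" using cc_pre[OF CC] .
  have c: "is_category C" using P by (rule pre_cat)
  obtain A' d i where d: "d \<in> hom C X A'" and i: "i \<in> hom C A' A"
    and dd: "deflation E d" and ii: "inflation E i" and fe: "Cp C i d = f"
    using adm_A2[OF AD A f] by blast
  obtain k where kd: "(k, d) \<in> E" using defl_D[OF dd] by blast
  obtain g where ig: "(i, g) \<in> E" using infl_D[OF ii] by blast
  have kcp1: "kernel_cokernel_pair C k d" using cc_kcp[OF CC kd] .
  have kcp2: "kernel_cokernel_pair C i g" using cc_kcp[OF CC ig] .
  have dcok: "is_cokernel C d k" using kcp1 unfolding kernel_cokernel_pair_def by (rule conjunct2)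
  have iker: "is_kernel C i g" using kcp2 unfolding kernel_cokernel_pair_def by (rule conjunct1)
  have dD: "Cd C d = A'" using homD[OF d] by simp
  have iD: "Dm C i = A'" using homD[OF i] by simp
  show ?thesis
  proof (intro conjI impI)
    assume m: "is_mono C f"
    have dm: "is_mono C d" using mono_comp_right[OF c d i] m fe by simp
    have diso: "is_iso C d" using cokernel_mono_iso[OF P dcok dm] .
    have "(Cp C i d, g) \<in> E" using infl_iso[OF CC ig diso] dD iD by simp
    then show "inflation E f" using fe unfolding inflation_def by blast
  next
    assume e: "is_epi C f"
    have ie: "is_epi C i" using epi_comp_left[OF c d i] e fe by simp
    have iiso: "is_iso C i" using kernel_epi_iso[OF P iker ie] .
    have "(k, Cp C i d) \<in> E" using defl_iso[OF CC kd iiso] dD iD by simp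
    then show "deflation E f" using fe unfolding deflation_def by blast
  qed
qed

lemma zero_out:
  assumes "zero_object C Z" "X \<in> Ob C"
  shows "\<exists>!f. f \<in> hom C Z X" and "\<exists>!f. f \<in> hom C X Z" and "Z \<in> Ob C"
  using assms unfolding zero_object_def by blast+

lemma part2:
  assumes CC: "conflation_category C E" and AD: "adm_deflation_percolating C E \<A>"
    and Z: "zero_object C Z" and f: "f \<in> hom C X Z"
  shows "deflation E f"
proof -
  have P: "is_preadditive C" using cc_pre[OF CC] .
  have c: "is_category C" using P by (rule pre_cat)
  have ne: "\<A> \<noteq> {}" and sub: "\<A> \<subseteq> Ob C" using AD unfolding adm_deflation_percolating_def by blast+
  obtain A where A: "A \<in> \<A>" using ne by blast
  have AO: "A \<in> Ob C" using A sub by blast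
  have ZO: "Z \<in> Ob C" using Z unfolding zero_object_def by blast
  have XO: "X \<in> Ob C" using cat_Ob[OF c f] by blast
  have zA: "Zr C Z A \<in> hom C Z A" using zr_hom[OF P ZO AO] .
  obtain A' d i where A': "A' \<in> \<A>" and d: "d \<in> hom C Z A'" and i: "i \<in> hom C A' A"
    and dd: "deflation E d"
    using adm_A2[OF AD A zA] by blast
  have A'O: "A' \<in> Ob C" using A' sub by blast
  obtain k where kd: "(k, d) \<in> E" using defl_D[OF dd] by blast
  have dcok: "is_cokernel C d k" using cc_kcp[OF CC kd] unfolding kernel_cokernel_pair_def by (rule conjunct2)
  have de: "is_epi C d" using cokernel_epi[OF P dcok] .
  have dD: "Dm C d = Z" "Cd C d = A'" using homD[OF d] by auto
  have outu: "\<And>T u v. u \<in> hom C A' T \<Longrightarrow> v \<in> hom C A' T \<Longrightarrow> u = v"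
  proof -
    fix T u v assume u: "u \<in> hom C A' T" and v: "v \<in> hom C A' T"
    have TO: "T \<in> Ob C" using cat_Ob[OF c u] by blast
    have "Cp C u d \<in> hom C Z T" "Cp C v d \<in> hom C Z T" using cat_comp[OF c d u] cat_comp[OF c d v] by auto
    then have "Cp C u d = Cp C v d" using zero_out(1)[OF Z TO] by blast
    then show "u = v" using de u v dD unfolding is_epi_def by auto
  qed
  define d' where "d' = Zr C A' Z"
  have d'h: "d' \<in> hom C A' Z" using zr_hom[OF P A'O ZO] d'_def by simp
  have e1: "Cp C d' d = Idm C Z"
    using cat_comp[OF c d d'h] cat_id[OF c ZO] zero_out(1)[OF Z ZO] by blast
  have e2: "Cp C d d' = Idm C A'"
    using outu[OF cat_comp[OF c d'h d] cat_id[OF c A'O]] .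
  have d'iso: "is_iso C d'" using iso_intro[OF c d'h d e2 e1] .
  have df: "Cp C d f \<in> hom C X A'" using cat_comp[OF c f d] .
  have dfe: "is_epi C (Cp C d f)"
    unfolding is_epi_def
  proof (intro conjI allI impI)
    show "Cp C d f \<in> Ar C" using homD[OF df] by (rule conjunct1)
    fix T u v assume u: "u \<in> hom C (Cd C (Cp C d f)) T" and v: "v \<in> hom C (Cd C (Cp C d f)) T"
    have cd: "Cd C (Cp C d f) = A'" using homD[OF df] by simp
    show "u = v" by (rule outu) (use u v cd in simp_all)
  qed
  have "deflation E (Cp C d f)" using mp[OF conjunct2[OF part1[OF CC AD A' df]] dfe] .
  then obtain k' where kdf: "(k', Cp C d f) \<in> E" unfolding deflation_def by (elim exE)
  have "(k', Cp C d' (Cp C d f)) \<in> E" using defl_iso[OF CC kdf d'iso] homD[OF d'h] homD[OF df] by simp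
  moreover have "Cp C d' (Cp C d f) = f"
    using cat_assoc[OF c f d d'h] e1 cat_idl[OF c f] by simp
  ultimately show ?thesis unfolding deflation_def by (intro exI[of _ k']) simp
qed

theorem mainTheorem14:
  fixes C :: "('o, 'm) precat" and E :: "('m \<times> 'm) set" and \<A> :: "'o set"
  assumes "conflation_category C E"
    and "adm_deflation_percolating C E \<A>"
  shows "(\<forall>X A f. A \<in> \<A> \<longrightarrow> f \<in> hom C X A \<longrightarrow>
            (is_mono C f \<longrightarrow> inflation E f) \<and> (is_epi C f \<longrightarrow> deflation E f))
       \<and> (\<forall>X Z f. zero_object C Z \<longrightarrow> f \<in> hom C X Z \<longrightarrow> deflation E f)"
  using part1[OF assms] part2[OF assms] by blast

end
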